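(* Let $(\mathcal{C},\mathcal{B},Q,S)$ be an STV election, counted by the procedure described in the context. Let $w\in\mathcal{C}$ and $O\subseteq\mathcal{C}$, and suppose that $L_{\mathrm{basic}}(w)>U_{\mathrm{comp}}(o,w)$ (the assertion $\mathsf{AG}(w,o)$) holds for every $o\in O$. Then $L_{\mathrm{elim}}(w,O)$ is a lower bound on the tally of $w$ at any point of the count at which $w$ could be eliminated.
   Context: An STV election is a tuple $(\mathcal{C},\mathcal{B},Q,S)$ where $\mathcal{C}$ is a finite set of candidates, $\mathcal{B}$ is a multiset of ballots (each ballot is a finite sequence of distinct candidates, in order of preference, most preferred first, not necessarily containing all candidates), $S$ is the number of seats, and $Q=\lfloor |\mathcal{B}|/(S+1)\rfloor+1$ is the quota. For a sequence $\pi$, $\mathrm{first}(\pi)$ is its first element, and for a set $X$ of candidates, $\sigma_X(\pi)$ is the subsequence of $\pi$ consisting of the elements of $X$, in their original order. Counting: every ballot starts with value $1$ and is placed in the pile of its first-ranked candidate; a candidate's tally is the total value of the ballots in its pile. A candidate is eligible if neither eliminated nor seated. In each round every eligible candidate with tally at least $Q$ is seated (gets a quota), and the ballots in its pile get a reduced transfer value (e.g. unweighted Gregory: $(V_c-Q)/|\mathcal{B}_c|$, with $V_c$ the total value and $|\mathcal{B}_c|$ the number of ballots in its pile) and move to the next-ranked eligible candidate on each ballot (or are exhausted). If no candidate reaches a quota, the eligible candidate with smallest tally is eliminated and its ballots move at their current value to their next-ranked eligible candidate (or are exhausted). Counting stops when all $S$ seats are filled or the number of eligible candidates equals the number of unfilled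 seats, in which case all remaining eligible candidates are seated. Definitions (counts with multiplicity): $L_{\mathrm{basic}}(c)=|\{\beta\in\mathcal{B}:\mathrm{first}(\beta)=c\}|$; $U_{\mathrm{comp}}(c,c')=|\{\beta\in\mathcal{B}:\mathrm{first}(\sigma_{\{c,c'\}}(\beta))=c\}|$; $L_{\mathrm{elim}}(w,O)=|\{\beta\in\mathcal{B}:\mathrm{first}(\sigma_{\mathcal{C}\setminus O}(\beta))=w\}|$. *)

theory Defs
  imports Main "HOL.Real"
begin

text \<open>Ballots are lists of candidates; the multiset of ballots is represented by a
list of ballots (positions give ballot identity, multiplicities are preserved).\<close>

definition first :: "'c list \<Rightarrow> 'c option" where
  "first \<pi> = (case \<pi> of [] \<Rightarrow> None | x # _ \<Rightarrow> Some x)"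

definition sigma :: "'c set \<Rightarrow> 'c list \<Rightarrow> 'c list" where
  "sigma X \<pi> = filter (\<lambda>x. x \<in> X) \<pi>"

definition quota :: "'c list list \<Rightarrow> nat \<Rightarrow> nat" where
  "quota bs S = length bs div (S + 1) + 1"

definition L_basic :: "'c list list \<Rightarrow> 'c \<Rightarrow> nat" where
  "L_basic bs c = length (filter (\<lambda>\<beta>. first \<beta> = Some c) bs)"

definition U_comp :: "'c list list \<Rightarrow> 'c \<Rightarrow> 'c \<Rightarrow> nat" where
  "U_comp bs c c' = length (filter (\<lambda>\<beta>. first (sigma {c, c'} \<beta>) = Some c) bs)"

definition L_elim :: "'c set \<Rightarrow> 'c list list \<Rightarrow> 'c \<Rightarrow> 'c set \<Rightarrow> nat" where
  "L_elim C bs w Os = length (filter (\<lambda>\<beta>. first (sigma (C - Os) \<beta>) = Some w) bs)"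

text \<open>State of the count: seated candidates, eliminated candidates, and the current
value of each ballot (indexed by its position in the ballot list).\<close>

record 'c stv_state =
  elected :: "'c set"
  excluded :: "'c set"
  bvalue :: "nat \<Rightarrow> real"

definition eligible :: "'c set \<Rightarrow> 'c stv_state \<Rightarrow> 'c set" where
  "eligible C s = C - elected s - excluded s"

definition holder :: "'c set \<Rightarrow> 'c list list \<Rightarrow> 'c stv_state \<Rightarrow> nat \<Rightarrow> 'c option" where
  "holder C bs s i = first (sigma (eligible C s) (bs ! i))"

definition pile :: "'c set \<Rightarrow> 'c list list \<Rightarrow> 'c stv_state \<Rightarrow> 'c \<Rightarrow> nat set" where
  "pile C bs s c = {i. i < length bs \<and> holder C bs s i = Some c}"

definition tally :: "'c set \<Rightarrow> 'c list list \<Rightarrow> 'c stv_state \<Rightarrow> 'c \<Rightarrow> real" where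
  "tally C bs s c = (\<Sum>i \<in> pile C bs s c. bvalue s i)"

definition init_state :: "'c stv_state" where
  "init_state = \<lparr>elected = {}, excluded = {}, bvalue = (\<lambda>_. 1)\<rparr>"

definition continuing :: "'c set \<Rightarrow> nat \<Rightarrow> 'c stv_state \<Rightarrow> bool" where
  "continuing C S s \<longleftrightarrow> card (elected s) < S \<and> card (eligible C s) > S - card (elected s)"

definition gregory_values ::
  "'c set \<Rightarrow> 'c list list \<Rightarrow> nat \<Rightarrow> 'c stv_state \<Rightarrow> 'c set \<Rightarrow> nat \<Rightarrow> real" where
  "gregory_values C bs S s Sn = (\<lambda>i. case holder C bs s i of
      Some c \<Rightarrow> (if c \<in> Sn
                 then (tally C bs s c - real (quota bs S)) / real (card (pile C bs s c))
                 else bvalue s i)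
    | None \<Rightarrow> bvalue s i)"

inductive stv_step :: "'c set \<Rightarrow> 'c list list \<Rightarrow> nat \<Rightarrow> 'c stv_state \<Rightarrow> 'c stv_state \<Rightarrow> bool"
  for C bs S where
  seat: "\<lbrakk> continuing C S s;
           Sn = {c \<in> eligible C s. tally C bs s c \<ge> real (quota bs S)};
           Sn \<noteq> {} \<rbrakk> \<Longrightarrow>
         stv_step C bs S s
           \<lparr>elected = elected s \<union> Sn, excluded = excluded s,
            bvalue = gregory_values C bs S s Sn\<rparr>"
| elim: "\<lbrakk> continuing C S s;
           \<forall>d \<in> eligible C s. tally C bs s d < real (quota bs S);
           c \<in> eligible C s;
           \<forall>d \<in> eligible C s. tally C bs s c \<le> tally C bs s d \<rbrakk> \<Longrightarrow>
         stv_step C bs S s (s\<lparr>excluded := excluded s \<union> {c}\<rparr>)"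
| fill: "\<lbrakk> card (elected s) < S; \<not> continuing C S s \<rbrakk> \<Longrightarrow>
         stv_step C bs S s (s\<lparr>elected := elected s \<union> eligible C s\<rparr>)"

definition reachable :: "'c set \<Rightarrow> 'c list list \<Rightarrow> nat \<Rightarrow> 'c stv_state \<Rightarrow> bool" where
  "reachable C bs S s \<longleftrightarrow> (stv_step C bs S)\<^sup>*\<^sup>* init_state s"

definition could_be_eliminated :: "'c set \<Rightarrow> 'c list list \<Rightarrow> nat \<Rightarrow> 'c stv_state \<Rightarrow> 'c \<Rightarrow> bool" where
  "could_be_eliminated C bs S s w \<longleftrightarrow>
     continuing C S s \<and>
     (\<forall>d \<in> eligible C s. tally C bs s d < real (quota bs S)) \<and>
     w \<in> eligible C s \<and>
     (\<forall>d \<in> eligible C s. tally C bs s w \<le> tally C bs s d)"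

end

theory Submission
  imports Defs
begin

lemma first_sigma_sub:
  "first (sigma E b) = Some x \<Longrightarrow> F \<subseteq> E \<Longrightarrow> x \<in> F \<Longrightarrow> first (sigma F b) = Some x"
  by (induction b) (auto simp: first_def sigma_def split: if_splits)

lemma first_sigma_CO:
  "first (sigma (C - Os) b) = Some w \<Longrightarrow> set b \<subseteq> C \<Longrightarrow> E \<subseteq> C \<Longrightarrow> w \<in> E
   \<Longrightarrow> E \<inter> Os = {} \<Longrightarrow> first (sigma E b) = Some w"
  by (induction b) (auto simp: first_def sigma_def split: if_splits)

lemma first_sigma_CO2:
  "first (sigma (C - Os) b) = Some w \<Longrightarrow> set b \<subseteq> C \<Longrightarrow> w \<in> E
   \<Longrightarrow> \<exists>x. first (sigma E b) = Some x \<and> (x \<in> Os \<or> x = w)"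
  by (induction b) (auto simp: first_def sigma_def split: if_splits)

lemma first_sigma_in: "first (sigma E b) = Some x \<Longrightarrow> x \<in> set b"
  by (induction b) (auto simp: first_def sigma_def split: if_splits)

lemma first_Cons_sigma: "first b = Some w \<Longrightarrow> w \<in> E \<Longrightarrow> first (sigma E b) = Some w"
  by (cases b) (auto simp: first_def sigma_def)

lemma finite_pile: "finite (pile C bs s c)"
  unfolding pile_def by auto

lemma tally_ge_card:
  assumes "T \<subseteq> pile C bs s c" "\<forall>i. 0 \<le> bvalue s i" "\<forall>i\<in>T. bvalue s i = 1"
  shows "real (card T) \<le> tally C bs s c"
proof -
  have "real (card T) = (\<Sum>i\<in>T. bvalue s i)" using assms(3) by simp
  also have "\<dots> \<le> tally C bs s c" unfolding tally_def
    by (rule sum_mono2[OF finite_pile assms(1)]) (use assms(2) in auto)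
  finally show ?thesis .
qed

lemma tally_le_card:
  assumes "\<forall>i. bvalue s i \<le> 1"
  shows "tally C bs s c \<le> real (card (pile C bs s c))"
proof -
  have "tally C bs s c \<le> (\<Sum>i\<in>pile C bs s c. 1)" unfolding tally_def
    by (rule sum_mono) (use assms in auto)
  then show ?thesis by simp
qed

lemma tally_upper:
  assumes "\<forall>i. bvalue s i \<le> 1" "w \<in> eligible C s" "oc \<in> eligible C s"
  shows "tally C bs s oc \<le> real (U_comp bs oc w)"
proof -
  have sub: "pile C bs s oc \<subseteq> {i. i < length bs \<and> first (sigma {oc, w} (bs ! i)) = Some oc}"
    using assms(2,3) by (auto simp: pile_def holder_def intro: first_sigma_sub)
  have "card (pile C bs s oc) \<le> card {i. i < length bs \<and> first (sigma {oc, w} (bs ! i)) = Some oc}"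
    by (rule card_mono[OF _ sub]) auto
  also have "\<dots> = U_comp bs oc w" by (simp add: U_comp_def length_filter_conv_card)
  finally show ?thesis using tally_le_card[OF assms(1), of C bs oc] by linarith
qed

definition Inv where
  "Inv C bs Os w s \<longleftrightarrow> (\<forall>i. 0 \<le> bvalue s i \<and> bvalue s i \<le> 1) \<and>
     (w \<in> eligible C s \<longrightarrow> (\<forall>i<length bs. first (sigma (C - Os) (bs ! i)) = Some w \<longrightarrow> bvalue s i = 1))"

lemma w_notin_O:
  assumes "\<forall>oc \<in> Os. L_basic bs w > U_comp bs oc w"
  shows "w \<notin> Os"
proof
  assume "w \<in> Os"
  then have "L_basic bs w > U_comp bs w w" using assms by auto
  moreover have "L_basic bs w \<le> U_comp bs w w" unfolding L_basic_def U_comp_def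
    unfolding length_filter_conv_card
    by (rule card_mono) (auto intro: first_Cons_sigma)
  ultimately show False by simp
qed

lemma tally_lower:
  assumes "Inv C bs Os w s" "w \<in> eligible C s" "w \<in> C" "w \<notin> Os"
  shows "real (L_basic bs w) \<le> tally C bs s w"
proof -
  let ?T = "{i. i < length bs \<and> first (bs ! i) = Some w}"
  have "?T \<subseteq> pile C bs s w" using assms(2)
    by (auto simp: pile_def holder_def intro: first_Cons_sigma)
  moreover have "\<forall>i\<in>?T. bvalue s i = 1"
    using assms by (auto simp: Inv_def intro: first_Cons_sigma)
  ultimately have "real (card ?T) \<le> tally C bs s w"
    using assms(1) by (intro tally_ge_card) (auto simp: Inv_def)
  then show ?thesis by (simp add: L_basic_def length_filter_conv_card)
qed

lemma quota_pos: "quota bs S \<ge> 1" by (simp add: quota_def)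

lemma step_elig: "stv_step C bs S s s' \<Longrightarrow> eligible C s' \<subseteq> eligible C s"
  by (induction rule: stv_step.induct) (auto simp: eligible_def)

lemma Inv_step:
  assumes st: "stv_step C bs S s s'" and I: "Inv C bs Os w s"
    and bal: "\<forall>\<beta> \<in> set bs. distinct \<beta> \<and> set \<beta> \<subseteq> C"
    and wC: "w \<in> C" and AG: "\<forall>oc \<in> Os. L_basic bs w > U_comp bs oc w"
  shows "Inv C bs Os w s'"
  using st
proof (cases rule: stv_step.cases)
  case (seat Sn)
  have wO: "w \<notin> Os" using w_notin_O[OF AG] .
  have bv: "bvalue s' = gregory_values C bs S s Sn" using seat(1) by simp
  have vals: "\<forall>i. 0 \<le> bvalue s' i \<and> bvalue s' i \<le> 1"
  proof
    fix i
    show "0 \<le> bvalue s' i \<and> bvalue s' i \<le> 1"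
    proof (cases "holder C bs s i")
      case None then show ?thesis using I unfolding bv by (simp add: gregory_values_def Inv_def)
    next
      case (Some c)
      show ?thesis
      proof (cases "c \<in> Sn")
        case False then show ?thesis using I Some unfolding bv by (simp add: gregory_values_def Inv_def)
      next
        case True
        have tq: "tally C bs s c \<ge> real (quota bs S)" using True seat by auto
        have q1: "real (quota bs S) \<ge> 1" using quota_pos[of bs S] by simp
        have tc: "tally C bs s c \<le> real (card (pile C bs s c))"
          using I by (intro tally_le_card) (auto simp: Inv_def)
        have "(tally C bs s c - real (quota bs S)) / real (card (pile C bs s c)) \<le> 1"
          using tc tq q1 by (cases "card (pile C bs s c) = 0") (auto simp: divide_le_eq)
        moreover have "0 \<le> (tally C bs s c - real (quota bs S)) / real (card (pile C bs s c))"
          using tq by simp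
        ultimately show ?thesis using True Some unfolding bv by (simp add: gregory_values_def)
      qed
    qed
  qed
  moreover have "\<forall>i<length bs. first (sigma (C - Os) (bs ! i)) = Some w \<longrightarrow> bvalue s' i = 1"
    if we': "w \<in> eligible C s'"
  proof (intro allI impI)
    fix i assume il: "i < length bs" and fi: "first (sigma (C - Os) (bs ! i)) = Some w"
    have we: "w \<in> eligible C s" using step_elig[OF st] we' by auto
    have wSn: "w \<notin> Sn" using we' seat by (auto simp: eligible_def)
    have tw: "real (L_basic bs w) \<le> tally C bs s w"
      using tally_lower[OF I we wC wO] .
    have OSn: "oc \<notin> Sn" if "oc \<in> Os" for oc
    proof
      assume oS: "oc \<in> Sn"
      then have "oc \<in> eligible C s" "tally C bs s oc \<ge> real (quota bs S)" using seat by auto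
      moreover have "tally C bs s oc \<le> real (U_comp bs oc w)"
        using I we \<open>oc \<in> eligible C s\<close> by (intro tally_upper) (auto simp: Inv_def)
      moreover have "U_comp bs oc w < L_basic bs w" using AG that by auto
      ultimately have "tally C bs s w \<ge> real (quota bs S)" using tw by linarith
      then have "w \<in> Sn" using seat we by auto
      then show False using wSn by simp
    qed
    have "bs ! i \<in> set bs" using il by simp
    then have "set (bs ! i) \<subseteq> C" using bal by auto
    from first_sigma_CO2[OF fi this we] obtain x where
      x: "holder C bs s i = Some x" "x \<in> Os \<or> x = w" by (auto simp: holder_def)
    have "x \<notin> Sn" using x(2) OSn wSn by auto
    moreover have "bvalue s i = 1" using I we il fi by (auto simp: Inv_def)
    ultimately show "bvalue s' i = 1" using x unfolding bv by (simp add: gregory_values_def)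
  qed
  ultimately show ?thesis unfolding Inv_def by blast
next
  case (elim c)
  then have "bvalue s' = bvalue s" by simp
  then show ?thesis using I step_elig[OF st] unfolding Inv_def by (metis subsetD)
next
  case fill
  then have "bvalue s' = bvalue s" by simp
  then show ?thesis using I step_elig[OF st] unfolding Inv_def by (metis subsetD)
qed

lemma Inv_reach:
  assumes "reachable C bs S s"
    and bal: "\<forall>\<beta> \<in> set bs. distinct \<beta> \<and> set \<beta> \<subseteq> C"
    and wC: "w \<in> C" and AG: "\<forall>oc \<in> Os. L_basic bs w > U_comp bs oc w"
  shows "Inv C bs Os w s"
proof -
  have "(stv_step C bs S)\<^sup>*\<^sup>* init_state s" using assms(1) by (simp add: reachable_def)
  then show ?thesis
  proof (induction rule: rtranclp_induct)
    case base then show ?case by (simp add: Inv_def init_state_def)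
  next
    case (step y z) show ?case by (rule Inv_step[OF step.hyps(2) step.IH bal wC AG])
  qed
qed

theorem lemma3:
  fixes C :: "'c set" and bs :: "'c list list" and S :: nat
    and w :: 'c and Os :: "'c set" and s :: "'c stv_state"
  assumes "finite C"
    and "\<forall>\<beta> \<in> set bs. distinct \<beta> \<and> set \<beta> \<subseteq> C"
    and "w \<in> C" and "Os \<subseteq> C"
    and "\<forall>oc \<in> Os. L_basic bs w > U_comp bs oc w"
    and "reachable C bs S s"
    and "could_be_eliminated C bs S s w"
  shows "real (L_elim C bs w Os) \<le> tally C bs s w"
proof -
  have I: "Inv C bs Os w s" using Inv_reach assms(6,2,3,5) .
  have wO: "w \<notin> Os" using w_notin_O[OF assms(5)] .
  have we: "w \<in> eligible C s" and mn: "\<forall>d \<in> eligible C s. tally C bs s w \<le> tally C bs s d"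
    using assms(7) by (auto simp: could_be_eliminated_def)
  have tw: "real (L_basic bs w) \<le> tally C bs s w" using tally_lower[OF I we assms(3) wO] .
  have disj: "eligible C s \<inter> Os = {}"
  proof (rule ccontr)
    assume "eligible C s \<inter> Os \<noteq> {}"
    then obtain oc where oc: "oc \<in> eligible C s" "oc \<in> Os" by auto
    have "tally C bs s oc \<le> real (U_comp bs oc w)"
      using I we oc by (intro tally_upper) (auto simp: Inv_def)
    moreover have "U_comp bs oc w < L_basic bs w" using assms(5) oc by auto
    moreover have "tally C bs s w \<le> tally C bs s oc" using mn oc by auto
    ultimately show False using tw by linarith
  qed
  let ?T = "{i. i < length bs \<and> first (sigma (C - Os) (bs ! i)) = Some w}"
  have "?T \<subseteq> pile C bs s w"
  proof
    fix i assume "i \<in> ?T"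
    then have il: "i < length bs" and fi: "first (sigma (C - Os) (bs ! i)) = Some w" by auto
    have "set (bs ! i) \<subseteq> C" using il assms(2) by auto
    then have "first (sigma (eligible C s) (bs ! i)) = Some w"
      using first_sigma_CO[OF fi _ _ we disj] by (auto simp: eligible_def)
    then show "i \<in> pile C bs s w" using il by (simp add: pile_def holder_def)
  qed
  moreover have "\<forall>i\<in>?T. bvalue s i = 1" using I we by (auto simp: Inv_def)
  ultimately have "real (card ?T) \<le> tally C bs s w"
    using I by (intro tally_ge_card) (auto simp: Inv_def)
  then show ?thesis by (simp add: L_elim_def length_filter_conv_card)
qed

end
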